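(* For every formula $A$ of $\mathsf{LTL}^{\ll}$, every model $\sigma$ and every $i \in \mathbb{N}$: $\sigma, i \models \top \sim A$ if and only if $\sigma, i \models \Diamond\Box A$. That is, the formula $\top \sim A$ is equivalent to the formula $\Diamond \Box A$.
   Context: Fix a set $\mathsf{Prop}$ of atomic propositions. Formulas of $\mathsf{LTL}^{\ll}$ are built from atomic propositions $P \in \mathsf{Prop}$ by $\lnot A$, $A \land B$, $\mathsf{X} A$, $A \mathbin{\mathsf{U}} B$ and $A \ll B$; $\lor$ is defined from $\lnot,\land$ as usual. Set $\top := P \lor \lnot P$ for a fixed $P \in \mathsf{Prop}$, $\Diamond B := \top \mathbin{\mathsf{U}} B$, $\Box B := \lnot \Diamond \lnot B$, and $A \sim B := \lnot(A \ll B) \land \lnot(B \ll A)$. A model $\sigma$ is an $\omega$-word $\sigma_0\sigma_1\sigma_2\ldots$ over the alphabet $2^{\mathsf{Prop}}$. Satisfaction is defined by: $\sigma,i \models P$ iff $P \in \sigma_i$; $\sigma,i\models \lnot A$ iff not $\sigma,i\models A$; $\sigma,i\models A\land B$ iff both hold; $\sigma,i\models \mathsf{X}A$ iff $\sigma,i+1\models A$; $\sigma,i\models A\mathbin{\mathsf{U}}B$ iff there is $j\ge i$ with $\sigma,j\models B$ and $\sigma,k\models A$ for all $i\le k<j$; $\sigma,i\models A\ll B$ iff for every $b$ there exists $j$ with $\mathrm{card}(A_\sigma^{i,j}) + b \le \mathrm{card}(B_\sigma^{i,j})$, where $A_\sigma^{i,j} := \{k \in \mathbb{N} : i \le k \le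 j,\ \sigma,k\models A\}$ (quantifiers over $b$ and $j$ range over natural numbers). *)

theory Defs
  imports Main
begin

datatype 'p ltl =
    Prop 'p
  | Not "'p ltl"
  | And "'p ltl" "'p ltl"
  | Next "'p ltl"
  | Until "'p ltl" "'p ltl"
  | Less "'p ltl" "'p ltl"

type_synonym 'p model = "nat \<Rightarrow> 'p set"

fun sat :: "'p model \<Rightarrow> nat \<Rightarrow> 'p ltl \<Rightarrow> bool" where
  "sat \<sigma> i (Prop P) = (P \<in> \<sigma> i)"
| "sat \<sigma> i (Not A) = (\<not> sat \<sigma> i A)"
| "sat \<sigma> i (And A B) = (sat \<sigma> i A \<and> sat \<sigma> i B)"
| "sat \<sigma> i (Next A) = sat \<sigma> (Suc i) A"
| "sat \<sigma> i (Until A B) = (\<exists>j\<ge>i. sat \<sigma> j B \<and> (\<forall>k. i \<le> k \<and> k < j \<longrightarrow> sat \<sigma> k A))"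
| "sat \<sigma> i (Less A B) = (\<forall>b::nat. \<exists>j::nat.
      card {k. i \<le> k \<and> k \<le> j \<and> sat \<sigma> k A} + b \<le> card {k. i \<le> k \<and> k \<le> j \<and> sat \<sigma> k B})"

definition Or :: "'p ltl \<Rightarrow> 'p ltl \<Rightarrow> 'p ltl" where
  "Or A B = Not (And (Not A) (Not B))"

definition Top :: "'p \<Rightarrow> 'p ltl" where
  "Top P = Or (Prop P) (Not (Prop P))"

definition Diamond :: "'p \<Rightarrow> 'p ltl \<Rightarrow> 'p ltl" where
  "Diamond P B = Until (Top P) B"

definition Box :: "'p \<Rightarrow> 'p ltl \<Rightarrow> 'p ltl" where
  "Box P B = Not (Diamond P (Not B))"

definition Sim :: "'p ltl \<Rightarrow> 'p ltl \<Rightarrow> 'p ltl" where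
  "Sim A B = And (Not (Less A B)) (Not (Less B A))"

end

theory Submission
  imports Defs
begin

lemma sat_Top[simp]: "sat \<sigma> i (Top P)"
  by (auto simp: Top_def Or_def)

lemma card_split:
  "card {k. i \<le> k \<and> k \<le> j \<and> Q k} + card {k. i \<le> k \<and> k \<le> j \<and> \<not> Q k} = Suc j - i"
proof -
  have "{k. i \<le> k \<and> k \<le> j \<and> Q k} \<union> {k. i \<le> k \<and> k \<le> j \<and> \<not> Q k} = {i..j}" by auto
  moreover have "card ({k. i \<le> k \<and> k \<le> j \<and> Q k} \<union> {k. i \<le> k \<and> k \<le> j \<and> \<not> Q k})
     = card {k. i \<le> k \<and> k \<le> j \<and> Q k} + card {k. i \<le> k \<and> k \<le> j \<and> \<not> Q k}"
    by (rule card_Un_disjoint) auto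
  ultimately show ?thesis by simp
qed

lemma not_less_top: "\<not> sat \<sigma> i (Less (Top P) A)"
proof
  assume "sat \<sigma> i (Less (Top P) A)"
  hence "\<exists>j. card {k. i \<le> k \<and> k \<le> j \<and> sat \<sigma> k (Top P)} + 1 \<le> card {k. i \<le> k \<and> k \<le> j \<and> sat \<sigma> k A}"
    by (simp only: sat.simps)
  then obtain j where j: "card {k. i \<le> k \<and> k \<le> j} + 1 \<le> card {k. i \<le> k \<and> k \<le> j \<and> sat \<sigma> k A}"
    by auto
  have "card {k. i \<le> k \<and> k \<le> j \<and> sat \<sigma> k A} \<le> card {k. i \<le> k \<and> k \<le> j}"
    by (rule card_mono) auto
  with j show False by simp
qed

lemma less_top_iff: "sat \<sigma> i (Less A (Top P)) \<longleftrightarrow> infinite {k. i \<le> k \<and> \<not> sat \<sigma> k A}"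
  (is "?L \<longleftrightarrow> infinite ?N")
proof
  assume L: ?L
  show "infinite ?N"
  proof
    assume fin: "finite ?N"
      from L have "\<exists>j. card {k. i \<le> k \<and> k \<le> j \<and> sat \<sigma> k A} + (card ?N + 1)
        \<le> card {k. i \<le> k \<and> k \<le> j \<and> sat \<sigma> k (Top P)}" by (simp only: sat.simps)
    then obtain j where j: "card {k. i \<le> k \<and> k \<le> j \<and> sat \<sigma> k A} + (card ?N + 1)
        \<le> card {k. i \<le> k \<and> k \<le> j \<and> sat \<sigma> k (Top P)}" by blast
    have e: "{k. i \<le> k \<and> k \<le> j \<and> sat \<sigma> k (Top P)} = {k. i \<le> k \<and> k \<le> j \<and> True}" by simp
    have "card {k. i \<le> k \<and> k \<le> j \<and> \<not> sat \<sigma> k A} \<le> card ?N"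
      by (rule card_mono[OF fin]) auto
    with j e card_split[of i j "\<lambda>k. sat \<sigma> k A"] card_split[of i j "\<lambda>k. True"]
    show False by simp
  qed
next
  assume inf: "infinite ?N"
  show ?L
  proof (simp only: sat.simps, intro allI)
    fix b
    obtain S where S: "S \<subseteq> ?N" "finite S" "card S = b"
      using infinite_arbitrarily_large[OF inf] by blast
    define j where "j = Max (insert 0 S)"
    have "S \<subseteq> {k. i \<le> k \<and> k \<le> j \<and> \<not> sat \<sigma> k A}"
      using S unfolding j_def by auto
    moreover have fin: "finite {k. i \<le> k \<and> k \<le> j \<and> \<not> sat \<sigma> k A}"
      by (rule finite_subset[of _ "{..j}"]) auto
    ultimately have "b \<le> card {k. i \<le> k \<and> k \<le> j \<and> \<not> sat \<sigma> k A}"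
      using S(3) card_mono by blast
    with card_split[of i j "\<lambda>k. sat \<sigma> k A"] card_split[of i j "\<lambda>k. True"]
    show "\<exists>j. card {k. i \<le> k \<and> k \<le> j \<and> sat \<sigma> k A} + b \<le> card {k. i \<le> k \<and> k \<le> j \<and> sat \<sigma> k (Top P)}"
      by (intro exI[of _ j]) simp
  qed
qed

lemma sat_Diamond: "sat \<sigma> i (Diamond P B) \<longleftrightarrow> (\<exists>j\<ge>i. sat \<sigma> j B)"
  by (simp add: Diamond_def)

lemma sat_Box: "sat \<sigma> i (Box P B) \<longleftrightarrow> (\<forall>j\<ge>i. sat \<sigma> j B)"
  by (simp add: Box_def sat_Diamond)

lemma db_iff: "sat \<sigma> i (Diamond P (Box P A)) \<longleftrightarrow> finite {k. i \<le> k \<and> \<not> sat \<sigma> k A}"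
proof
  assume "sat \<sigma> i (Diamond P (Box P A))"
  then obtain j where "\<forall>m\<ge>j. sat \<sigma> m A"
    unfolding sat_Diamond sat_Box by blast
  hence "{k. i \<le> k \<and> \<not> sat \<sigma> k A} \<subseteq> {..<j}"
  proof (intro subsetI)
    fix k assume all: "\<forall>m\<ge>j. sat \<sigma> m A" and k: "k \<in> {k. i \<le> k \<and> \<not> sat \<sigma> k A}"
    show "k \<in> {..<j}"
    proof (rule ccontr)
      assume "k \<notin> {..<j}"
      hence "j \<le> k" by simp
      with all k show False by simp
    qed
  qed
  thus "finite {k. i \<le> k \<and> \<not> sat \<sigma> k A}" by (rule finite_subset) simp
next
  assume "finite {k. i \<le> k \<and> \<not> sat \<sigma> k A}"
  hence "\<exists>M. \<forall>k \<in> {k. i \<le> k \<and> \<not> sat \<sigma> k A}. k \<le> M"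
    by (simp only: finite_nat_set_iff_bounded_le)
  then obtain M where M: "\<And>k. k \<in> {k. i \<le> k \<and> \<not> sat \<sigma> k A} \<Longrightarrow> k \<le> M"
    by blast
  have "\<forall>m\<ge>max i (Suc M). sat \<sigma> m A"
  proof (intro allI impI)
    fix m assume "max i (Suc M) \<le> m"
    hence "\<not> m \<le> M" "i \<le> m" by simp_all
    thus "sat \<sigma> m A" using M[of m] by blast
  qed
  thus "sat \<sigma> i (Diamond P (Box P A))"
    unfolding sat_Diamond sat_Box by (intro exI[of _ "max i (Suc M)"]) simp
qed

theorem mainTheorem1:
  fixes P :: 'p and A :: "'p ltl" and \<sigma> :: "'p model" and i :: nat
  shows "sat \<sigma> i (Sim (Top P) A) \<longleftrightarrow> sat \<sigma> i (Diamond P (Box P A))"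
  unfolding db_iff using not_less_top[of \<sigma> i P A] less_top_iff[of \<sigma> i A P]
  by (simp add: Sim_def)

end
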